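(* Let $d,l,m\geq1$, fix arbitrary norms $\|\cdot\|$ on $H(d)$ and on $M_{lm}(\mathbb{R})$, and let $\mathcal{Q}=\{P_1,\dots,P_l\}$ be a measurement scheme of POVMs with outcome set $\{1,\dots,m\}$ which determines any pure state among all states. Then there is a constant $C_{\mathcal{Q}}>0$ such that for every $\epsilon>0$, every pure state $\sigma$ and every $f\in M_{lm}(\mathbb{R})$ with $\|f\|\leq\epsilon$, setting $b=M_{\mathcal{Q}}(\sigma)+f$, any minimizer $Y^*$ of the convex program $$\text{minimize } \|M_{\mathcal{Q}}(Y)-b\|_2\quad\text{subject to } Y\in H(d),\ Y\geq0$$ satisfies $\|Y^*-\sigma\|\leq C_{\mathcal{Q}}\,\epsilon$. Here $\|\cdot\|_2$ is the Hilbert–Schmidt (Frobenius) norm on $M_{lm}(\mathbb{R})$.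
   Context: $H(d)$ is the real vector space of $d\times d$ complex Hermitian matrices and $M_{lm}(\mathbb{R})$ the real $l\times m$ matrices. A POVM with outcome set $\{1,\dots,m\}$ is a map $j\mapsto P(j)\in H(d)$ with $P(j)\geq0$ and $\sum_j P(j)=\mathbb{1}$. The scheme induces $M_{\mathcal{Q}}:H(d)\to M_{lm}(\mathbb{R})$, $M_{\mathcal{Q}}(X)_{i,j}=\mathrm{tr}(XP_i(j))$. A state is a positive semidefinite trace-one matrix; a pure state is a rank-one state $|\psi\rangle\langle\psi|$. $\mathcal{Q}$ determines any pure state among all states if for every pure state $\sigma$ and every state $\varrho$, $M_{\mathcal{Q}}(\sigma)=M_{\mathcal{Q}}(\varrho)$ implies $\varrho=\sigma$. *)

theory Defs
  imports "HOL-Analysis.Analysis"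
begin

text \<open>d x d complex matrices, indexed by a finite type 'd (d = CARD('d)).\<close>

definition cmat_adj :: "complex^'d^'d \<Rightarrow> complex^'d^'d" where
  "cmat_adj X = (\<chi> i j. cnj (X $ j $ i))"

definition hermitian :: "complex^'d^'d \<Rightarrow> bool" where
  "hermitian X \<longleftrightarrow> cmat_adj X = X"

definition ctrace :: "complex^'d^'d \<Rightarrow> complex" where
  "ctrace X = (\<Sum>i\<in>UNIV. X $ i $ i)"

definition psd :: "complex^'d^'d \<Rightarrow> bool" where
  "psd X \<longleftrightarrow> hermitian X \<and>
     (\<forall>v::complex^'d. let q = (\<Sum>i\<in>UNIV. \<Sum>j\<in>UNIV. cnj (v $ i) * X $ i $ j * v $ j)
                        in Im q = 0 \<and> 0 \<le> Re q)"

definition is_state :: "complex^'d^'d \<Rightarrow> bool" where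
  "is_state X \<longleftrightarrow> psd X \<and> ctrace X = 1"

definition is_pure_state :: "complex^'d^'d \<Rightarrow> bool" where
  "is_pure_state X \<longleftrightarrow> is_state X \<and>
     (\<exists>\<psi>::complex^'d. norm \<psi> = 1 \<and> X = (\<chi> i j. \<psi> $ i * cnj (\<psi> $ j)))"

definition is_povm :: "('m::finite \<Rightarrow> complex^'d^'d) \<Rightarrow> bool" where
  "is_povm P \<longleftrightarrow> (\<forall>j. psd (P j)) \<and> (\<Sum>j\<in>UNIV. P j) = mat 1"

text \<open>Measurement scheme Q = {P_1..P_l}, l = CARD('l); the induced map into l x m real matrices.\<close>
definition meas_map :: "('l::finite \<Rightarrow> 'm::finite \<Rightarrow> complex^'d^'d) \<Rightarrow> complex^'d^'d \<Rightarrow> real^'m^'l" where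
  "meas_map Q X = (\<chi> i j. Re (ctrace (X ** Q i j)))"

definition determines_pure :: "('l::finite \<Rightarrow> 'm::finite \<Rightarrow> complex^'d^'d) \<Rightarrow> bool" where
  "determines_pure Q \<longleftrightarrow>
     (\<forall>\<sigma> \<rho>. is_pure_state \<sigma> \<longrightarrow> is_state \<rho> \<longrightarrow> meas_map Q \<sigma> = meas_map Q \<rho> \<longrightarrow> \<rho> = \<sigma>)"

definition is_norm_on :: "'a::real_vector set \<Rightarrow> ('a \<Rightarrow> real) \<Rightarrow> bool" where
  "is_norm_on S N \<longleftrightarrow>
     (\<forall>x\<in>S. 0 \<le> N x) \<and> (\<forall>x\<in>S. N x = 0 \<longleftrightarrow> x = 0) \<and>
     (\<forall>c x. x \<in> S \<longrightarrow> N (c *\<^sub>R x) = \<bar>c\<bar> * N x) \<and>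
     (\<forall>x\<in>S. \<forall>y\<in>S. N (x + y) \<le> N x + N y)"

definition frob :: "real^'m^'l \<Rightarrow> real" where
  "frob A = sqrt (\<Sum>i\<in>UNIV. \<Sum>j\<in>UNIV. (A $ i $ j)^2)"

definition is_minimizer :: "('l::finite \<Rightarrow> 'm::finite \<Rightarrow> complex^'d^'d) \<Rightarrow> real^'m^'l \<Rightarrow> complex^'d^'d \<Rightarrow> bool" where
  "is_minimizer Q b Y \<longleftrightarrow> psd Y \<and>
     (\<forall>Z. psd Z \<longrightarrow> frob (meas_map Q Y - b) \<le> frob (meas_map Q Z - b))"

end

theory Submission
  imports Defs
begin


lemma norm_on_0: assumes "subspace S" "is_norm_on S N" shows "N 0 = 0"
proof -
  have "N ((0::real) *\<^sub>R 0) = \<bar>0::real\<bar> * N 0"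
    using assms unfolding is_norm_on_def by (metis subspace_0)
  then show ?thesis by simp
qed

lemma norm_on_sum:
  assumes S: "subspace S" and N: "is_norm_on S N" and fin: "finite A"
  shows "(\<forall>a\<in>A. f a \<in> S) \<Longrightarrow> N (\<Sum>a\<in>A. f a) \<le> (\<Sum>a\<in>A. N (f a))"
  using fin
proof (induction A rule: finite_induct)
  case empty
  show ?case using norm_on_0[OF S N] by simp
next
  case (insert a A)
  have s: "(\<Sum>a\<in>A. f a) \<in> S" using insert.prems S by (simp add: subspace_sum)
  have fa: "f a \<in> S" using insert.prems by simp
  have "N (f a + (\<Sum>a\<in>A. f a)) \<le> N (f a) + N (\<Sum>a\<in>A. f a)"
    using N s fa unfolding is_norm_on_def by blast
  moreover have "N (\<Sum>a\<in>A. f a) \<le> (\<Sum>a\<in>A. N (f a))" using insert.IH insert.prems by simp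
  ultimately show ?case using insert.hyps by simp
qed

lemma norm_on_scale: "is_norm_on S N \<Longrightarrow> x \<in> S \<Longrightarrow> N (c *\<^sub>R x) = \<bar>c\<bar> * N x"
  unfolding is_norm_on_def by (elim conjE) (erule allE, erule allE, erule mp)
lemma norm_on_nonneg: "is_norm_on S N \<Longrightarrow> x \<in> S \<Longrightarrow> 0 \<le> N x"
  unfolding is_norm_on_def by (elim conjE) (erule bspec)
lemma norm_on_eq0: "is_norm_on S N \<Longrightarrow> x \<in> S \<Longrightarrow> N x = 0 \<longleftrightarrow> x = 0"
  unfolding is_norm_on_def by (elim conjE) (erule bspec)
lemma norm_on_tri: "is_norm_on S N \<Longrightarrow> x \<in> S \<Longrightarrow> y \<in> S \<Longrightarrow> N (x + y) \<le> N x + N y"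
  unfolding is_norm_on_def by (elim conjE) (drule bspec, assumption, erule bspec)

lemma norm_on_upper:
  fixes N :: "'a::euclidean_space \<Rightarrow> real"
  assumes S: "subspace S" and N: "is_norm_on S N"
  shows "\<exists>K. \<forall>x\<in>S. N x \<le> K * norm x"
proof -
  obtain B where BS: "B \<subseteq> S" and orth: "pairwise orthogonal B"
    and B1: "\<And>x. x \<in> B \<Longrightarrow> norm x = 1" and ind: "independent B" and "card B = dim S" and sp: "span B = S"
    using orthonormal_basis_subspace[OF S] by blast
  have fin: "finite B" using ind by (metis independent_imp_finite)
  show ?thesis
  proof (intro exI ballI)
    fix x assume x: "x \<in> S"
    have "x \<in> range (\<lambda>u. \<Sum>v\<in>B. u v *\<^sub>R v)" using x sp span_finite[OF fin] by simp
    then obtain u where xu: "x = (\<Sum>v\<in>B. u v *\<^sub>R v)" by blast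
    have coef: "u b = inner x b" if b: "b \<in> B" for b
    proof -
      have "inner x b = (\<Sum>v\<in>B. u v * inner v b)" unfolding xu by (simp add: inner_sum_left)
      also have "\<dots> = (\<Sum>v\<in>B. if v = b then u b else 0)"
      proof (rule sum.cong)
        fix v assume v: "v \<in> B"
        show "u v * inner v b = (if v = b then u b else 0)"
        proof (cases "v = b")
          case True
          then show ?thesis using B1[OF b] by (simp add: dot_square_norm)
        next
          case False
          then show ?thesis using orth v b by (simp add: pairwise_def orthogonal_def)
        qed
      qed simp
      also have "\<dots> = u b" using b fin by simp
      finally show ?thesis by simp
    qed
    have "N x \<le> (\<Sum>v\<in>B. N (u v *\<^sub>R v))"
      unfolding xu by (rule norm_on_sum[OF S N fin]) (use BS S in \<open>auto intro: subspace_scale\<close>)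
    also have "\<dots> = (\<Sum>v\<in>B. \<bar>u v\<bar> * N v)" using BS by (intro sum.cong refl norm_on_scale[OF N]) auto
    also have "\<dots> \<le> (\<Sum>v\<in>B. norm x * N v)"
    proof (rule sum_mono)
      fix v assume v: "v \<in> B"
      have "\<bar>u v\<bar> \<le> norm x" using coef[OF v] Cauchy_Schwarz_ineq2[of x v] B1[OF v] by simp
      moreover have "0 \<le> N v" using BS v by (intro norm_on_nonneg[OF N]) auto
      ultimately show "\<bar>u v\<bar> * N v \<le> norm x * N v" by (rule mult_right_mono)
    qed
    also have "\<dots> = (\<Sum>v\<in>B. N v) * norm x" by (simp add: sum_distrib_left mult.commute)
    finally show "N x \<le> (\<Sum>v\<in>B. N v) * norm x" .
  qed
qed



lemma norm_on_lower:
  fixes N :: "'a::euclidean_space \<Rightarrow> real"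
  assumes N: "is_norm_on UNIV N"
  shows "\<exists>c>0. \<forall>x. c * norm x \<le> N x"
proof -
  obtain K where K: "\<And>x. N x \<le> K * norm x" using norm_on_upper[OF subspace_UNIV N] by auto
  have tri: "N (x + y) \<le> N x + N y" for x y using norm_on_tri[OF N] by simp
  have neg: "N (- x) = N x" for x using norm_on_scale[OF N, of x "-1"] by simp
  have lip: "\<bar>N x - N y\<bar> \<le> K * norm (x - y)" for x y
  proof -
    have "N x \<le> N y + N (x - y)" using tri[of y "x - y"] by simp
    moreover have "N y \<le> N x + N (y - x)" using tri[of x "y - x"] by simp
    moreover have "N (y - x) = N (x - y)" using neg[of "x - y"] by simp
    ultimately show ?thesis using K[of "x - y"] by linarith
  qed
  have Kpos: "0 \<le> K"
  proof -
    obtain b :: 'a where b: "b \<in> Basis" using nonempty_Basis by blast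
    have "0 \<le> N b" using norm_on_nonneg[OF N] by simp
    also have "\<dots> \<le> K * norm b" by (rule K)
    finally show ?thesis using b by simp
  qed
  have cont: "continuous_on UNIV N"
    unfolding continuous_on_iff
  proof (intro ballI allI impI)
    fix x and e :: real assume e: "0 < e"
    show "\<exists>d>0. \<forall>x'\<in>UNIV. dist x' x < d \<longrightarrow> dist (N x') (N x) < e"
    proof (intro exI[of _ "e / (K + 1)"] conjI ballI impI)
      show "0 < e / (K + 1)" using e Kpos by simp
      fix x' assume "dist x' x < e / (K + 1)"
      then have "norm (x' - x) * (K + 1) < e" using Kpos by (simp add: dist_norm pos_less_divide_eq)
      moreover have "dist (N x') (N x) \<le> K * norm (x' - x)" using lip by (simp add: dist_real_def)
      moreover have "K * norm (x' - x) \<le> norm (x' - x) * (K + 1)" using Kpos by (simp add: algebra_simps)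
      ultimately show "dist (N x') (N x) < e" by linarith
    qed
  qed
  have ne: "sphere (0::'a) 1 \<noteq> {}" by simp
  obtain x0 where x0: "x0 \<in> sphere (0::'a) 1" and mn: "\<And>y. y \<in> sphere 0 1 \<Longrightarrow> N x0 \<le> N y"
    using continuous_attains_inf[OF compact_sphere ne continuous_on_subset[OF cont]] by blast
  have pos: "0 < N x0"
  proof -
    have "x0 \<noteq> 0" using x0 by auto
    then have "N x0 \<noteq> 0" using norm_on_eq0[OF N] by simp
    then show ?thesis using norm_on_nonneg[OF N, of x0] by simp
  qed
  show ?thesis
  proof (intro exI[of _ "N x0"] conjI allI pos)
    fix x :: 'a
    show "N x0 * norm x \<le> N x"
    proof (cases "x = 0")
      case True then show ?thesis using norm_on_nonneg[OF N, of 0] by simp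
    next
      case False
      have "N x0 \<le> N ((1 / norm x) *\<^sub>R x)" using mn False by simp
      also have "\<dots> = N x / norm x" using norm_on_scale[OF N] by simp
      finally show ?thesis using False by (simp add: le_divide_eq)
    qed
  qed
qed


definition ip :: "complex^'d \<Rightarrow> complex^'d \<Rightarrow> complex" where
  "ip u v = (\<Sum>i\<in>UNIV. cnj (u$i) * v$i)"
definition smul :: "complex \<Rightarrow> complex^'d \<Rightarrow> complex^'d" where
  "smul c v = (\<chi> i. c * v$i)"
definition qf :: "complex^'d^'d \<Rightarrow> complex^'d \<Rightarrow> complex" where
  "qf X v = ip v (X *v v)"
definition outer :: "complex^'d \<Rightarrow> complex^'d^'d" where
  "outer p = (\<chi> i j. p$i * cnj (p$j))"

lemma smul_nth[simp]: "smul c v $ i = c * v $ i" by (simp add: smul_def)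

lemma scaleR_cplx[simp]: "(r::real) *\<^sub>R (z::complex) = complex_of_real r * z"
  by (simp add: scaleR_conv_of_real)

lemma ip_add_left: "ip (u + w) v = ip u v + ip w v"
  by (simp add: ip_def sum.distrib algebra_simps)
lemma ip_add_right: "ip v (u + w) = ip v u + ip v w"
  by (simp add: ip_def sum.distrib algebra_simps)
lemma ip_diff_left: "ip (u - w) v = ip u v - ip w v"
  by (simp add: ip_def sum_subtractf algebra_simps)
lemma ip_diff_right: "ip v (u - w) = ip v u - ip v w"
  by (simp add: ip_def sum_subtractf algebra_simps)
lemma ip_smul_left: "ip (smul c u) v = cnj c * ip u v"
  by (simp add: ip_def sum_distrib_left algebra_simps)
lemma ip_smul_right: "ip v (smul c u) = c * ip v u"
  by (simp add: ip_def sum_distrib_left algebra_simps)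
lemma ip_cnj: "cnj (ip u v) = ip v u"
  by (simp add: ip_def mult.commute)
lemma ip_zero_left[simp]: "ip 0 v = 0" by (simp add: ip_def)

lemma norm_sq_vec: "(norm (v::complex^'d))^2 = (\<Sum>i\<in>UNIV. (cmod (v$i))^2)"
  by (simp add: norm_vec_def L2_set_def sum_nonneg)

lemma ip_self: "ip v v = complex_of_real ((norm v)^2)"
proof -
  have "ip v v = (\<Sum>i\<in>UNIV. complex_of_real ((cmod (v$i))^2))"
    unfolding ip_def by (intro sum.cong refl) (metis complex_norm_square mult.commute)
  also have "\<dots> = complex_of_real ((norm v)^2)" by (simp add: norm_sq_vec)
  finally show ?thesis .
qed

lemma ip_self_eq0: "ip v v = 0 \<longleftrightarrow> v = 0"
  by (simp add: ip_self)

lemma mv_add: "(X::complex^'d^'d) *v (u + w) = X *v u + X *v w"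
  by (simp add: matrix_vector_mult_def vec_eq_iff sum.distrib algebra_simps)
lemma mv_diff: "(X::complex^'d^'d) *v (u - w) = X *v u - X *v w"
  by (simp add: matrix_vector_mult_def vec_eq_iff sum_subtractf algebra_simps)
lemma mv_smul: "(X::complex^'d^'d) *v (smul c u) = smul c (X *v u)"
  by (simp add: matrix_vector_mult_def vec_eq_iff sum_distrib_left algebra_simps)
lemma mv_madd: "((X::complex^'d^'d) + Y) *v u = X *v u + Y *v u"
  by (simp add: matrix_vector_mult_def vec_eq_iff sum.distrib algebra_simps)
lemma mv_mscale: "((r::real) *\<^sub>R (X::complex^'d^'d)) *v u = smul (of_real r) (X *v u)"
  by (simp add: matrix_vector_mult_def vec_eq_iff sum_distrib_left algebra_simps)

lemma herm_entry: assumes "hermitian X" shows "cnj (X$i$j) = X$j$i"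
proof -
  have "cmat_adj X $ j $ i = X $ j $ i" using assms by (simp add: hermitian_def)
  then show ?thesis by (simp add: cmat_adj_def)
qed

lemma herm_ip: assumes "hermitian X" shows "ip u (X *v v) = ip (X *v u) v"
proof -
  have "ip (X *v u) v = (\<Sum>i\<in>UNIV. \<Sum>j\<in>UNIV. cnj (X$i$j) * cnj (u$j) * v$i)"
    by (simp add: ip_def matrix_vector_mult_def cnj_sum sum_distrib_right)
  also have "\<dots> = (\<Sum>j\<in>UNIV. \<Sum>i\<in>UNIV. cnj (X$i$j) * cnj (u$j) * v$i)" by (rule sum.swap)
  also have "\<dots> = ip u (X *v v)"
    by (simp add: ip_def matrix_vector_mult_def sum_distrib_left herm_entry[OF assms] algebra_simps)
  finally show ?thesis by simp
qed

lemma qf_sum: "(\<Sum>i\<in>UNIV. \<Sum>j\<in>UNIV. cnj (v $ i) * X $ i $ j * v $ j) = qf X v"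
  by (simp add: qf_def ip_def matrix_vector_mult_def sum_distrib_left mult.assoc)

lemma qf_real: assumes "hermitian X" shows "Im (qf X v) = 0"
proof -
  have "cnj (qf X v) = qf X v" unfolding qf_def ip_cnj herm_ip[OF assms] by simp
  then have "Im (cnj (qf X v)) = Im (qf X v)" by simp
  then show ?thesis by simp
qed

lemma qf_of_real: "hermitian X \<Longrightarrow> qf X v = complex_of_real (Re (qf X v))"
  using qf_real by (simp add: complex_eq_iff)

lemma psd_iff: "psd X \<longleftrightarrow> hermitian X \<and> (\<forall>v. 0 \<le> Re (qf X v))"
proof
  assume "psd X" then show "hermitian X \<and> (\<forall>v. 0 \<le> Re (qf X v))"
    unfolding psd_def qf_sum Let_def by simp
next
  assume a: "hermitian X \<and> (\<forall>v. 0 \<le> Re (qf X v))"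
  then show "psd X" unfolding psd_def qf_sum Let_def by (simp add: qf_real)
qed

lemma herm_add: "hermitian X \<Longrightarrow> hermitian Y \<Longrightarrow> hermitian (X + Y)"
  by (simp add: hermitian_def cmat_adj_def vec_eq_iff)
lemma herm_diff: "hermitian X \<Longrightarrow> hermitian Y \<Longrightarrow> hermitian (X - Y)"
  by (simp add: hermitian_def cmat_adj_def vec_eq_iff)
lemma herm_scale: "hermitian X \<Longrightarrow> hermitian ((r::real) *\<^sub>R X)"
  unfolding hermitian_def cmat_adj_def by (simp add: vec_eq_iff)
lemma herm_zero: "hermitian 0"
  by (simp add: hermitian_def cmat_adj_def vec_eq_iff)
lemma herm_outer: "hermitian (outer p)"
  by (simp add: hermitian_def cmat_adj_def outer_def vec_eq_iff mult.commute)

lemma qf_add: "qf (X + Y) v = qf X v + qf Y v"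
  by (simp add: qf_def mv_madd ip_add_right)
lemma qf_scale: "qf ((r::real) *\<^sub>R X) v = of_real r * qf X v"
  by (simp add: qf_def mv_mscale ip_smul_right)

lemma outer_mv: "outer p *v v = smul (ip p v) p"
  by (simp add: outer_def matrix_vector_mult_def vec_eq_iff ip_def sum_distrib_left algebra_simps)

lemma qf_outer: "qf (outer p) v = complex_of_real ((cmod (ip p v))^2)"
proof -
  have "qf (outer p) v = ip p v * cnj (ip p v)"
    by (simp add: qf_def outer_mv ip_smul_right ip_cnj mult.commute)
  then show ?thesis by (metis complex_norm_square)
qed

lemma psd_outer: "psd (outer p)"
  unfolding psd_iff by (simp add: herm_outer qf_outer)

lemma psd_add: "psd X \<Longrightarrow> psd Y \<Longrightarrow> psd (X + Y)"
  unfolding psd_iff by (simp add: herm_add qf_add)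
lemma psd_scale: "psd X \<Longrightarrow> 0 \<le> r \<Longrightarrow> psd ((r::real) *\<^sub>R X)"
  unfolding psd_iff by (simp add: herm_scale qf_scale)

lemma ctrace_add: "ctrace (X + Y) = ctrace X + ctrace Y"
  by (simp add: ctrace_def sum.distrib)
lemma ctrace_scale: "ctrace ((r::real) *\<^sub>R X) = of_real r * ctrace X"
  by (simp add: ctrace_def sum_distrib_left)
lemma ctrace_outer: "ctrace (outer p) = complex_of_real ((norm p)^2)"
proof -
  have "ctrace (outer p) = ip p p" by (simp add: ctrace_def outer_def ip_def mult.commute)
  then show ?thesis by (simp add: ip_self)
qed

lemma pure_outer: "norm p = 1 \<Longrightarrow> is_pure_state (outer p)"
  unfolding is_pure_state_def is_state_def using psd_outer[of p] ctrace_outer[of p]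
  by (auto simp: outer_def)



lemma ctrace_mult_add: "ctrace ((X + Y) ** (P::complex^'d^'d)) = ctrace (X ** P) + ctrace (Y ** P)"
  by (simp add: ctrace_def matrix_matrix_mult_def sum.distrib distrib_right)
lemma ctrace_mult_diff: "ctrace ((X - Y) ** (P::complex^'d^'d)) = ctrace (X ** P) - ctrace (Y ** P)"
  by (simp add: ctrace_def matrix_matrix_mult_def sum_subtractf left_diff_distrib)
lemma ctrace_mult_scale: "ctrace (((r::real) *\<^sub>R X) ** (P::complex^'d^'d)) = of_real r * ctrace (X ** P)"
  by (simp add: ctrace_def matrix_matrix_mult_def sum_distrib_left mult.assoc)

lemma meas_add: "meas_map Q (X + Y) = meas_map Q X + meas_map Q Y"
  by (simp add: meas_map_def vec_eq_iff ctrace_mult_add)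
lemma meas_diff: "meas_map Q (X - Y) = meas_map Q X - meas_map Q Y"
  by (simp add: meas_map_def vec_eq_iff ctrace_mult_diff)
lemma meas_scale: "meas_map Q ((r::real) *\<^sub>R X) = r *\<^sub>R meas_map Q X"
  by (simp add: meas_map_def vec_eq_iff ctrace_mult_scale)

lemma meas_linear: "linear (meas_map Q)"
  by (rule linearI) (simp_all add: meas_add meas_scale)

lemma ctrace_sum_right:
  "finite A \<Longrightarrow> ctrace ((X::complex^'d^'d) ** (\<Sum>j\<in>A. P j)) = (\<Sum>j\<in>A. ctrace (X ** P j))"
proof (induction A rule: finite_induct)
  case empty
  then show ?case by (simp add: ctrace_def matrix_matrix_mult_def)
next
  case (insert a A)
  then show ?case
    by (simp add: matrix_add_ldistrib ctrace_def sum.distrib)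
qed

lemma ctrace_mat1: "ctrace ((X::complex^'d^'d) ** mat 1) = ctrace X"
  by simp

lemma meas_row_sum: assumes "is_povm (Q i)"
  shows "(\<Sum>j\<in>UNIV. meas_map Q X $ i $ j) = Re (ctrace X)"
proof -
  have "(\<Sum>j\<in>UNIV. meas_map Q X $ i $ j) = Re (\<Sum>j\<in>UNIV. ctrace (X ** Q i j))"
    by (simp add: meas_map_def)
  also have "\<dots> = Re (ctrace (X ** (\<Sum>j\<in>UNIV. Q i j)))" by (simp add: ctrace_sum_right)
  also have "\<dots> = Re (ctrace X)" using assms by (simp add: is_povm_def)
  finally show ?thesis .
qed

lemma herm_trace_real: assumes "hermitian X" shows "Im (ctrace X) = 0"
proof -
  have "Im (X$i$i) = 0" for i using herm_entry[OF assms, of i i]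
    by (metis cnj.sel(2) complex.expand cnj.sel(1) neg_equal_zero)
  then show ?thesis by (simp add: ctrace_def)
qed

lemma trace_zero:
  assumes "hermitian X" "\<forall>i. is_povm (Q i)" "meas_map Q X = 0"
  shows "ctrace X = 0"
proof -
  have "Re (ctrace X) = (\<Sum>j\<in>UNIV. meas_map Q X $ undefined $ j)"
    using meas_row_sum assms(2) by metis
  also have "\<dots> = 0" using assms(3) by simp
  finally show ?thesis using herm_trace_real[OF assms(1)] by (simp add: complex_eq_iff)
qed


lemma qf_smul: "qf X (smul c v) = cnj c * c * qf X v"
  by (simp add: qf_def mv_smul ip_smul_left ip_smul_right)

lemma cnj_mult_self: "cnj c * c = complex_of_real ((cmod c)^2)"
  by (metis complex_norm_square mult.commute)

lemma qf_vadd: "qf X (u + w) = qf X u + qf X w + ip u (X *v w) + ip w (X *v u)"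
  by (simp add: qf_def mv_add ip_add_left ip_add_right)

lemma scaleR_smul: "(r::real) *\<^sub>R (v::complex^'d) = smul (of_real r) v"
  by (simp add: vec_eq_iff)

lemma qf_cont: "continuous_on S (\<lambda>v. Re (qf X v))"
  unfolding qf_sum[symmetric] by (intro continuous_intros)

lemma ip_one_norm: "norm v = 1 \<Longrightarrow> ip v v = 1"
  by (simp add: ip_self)

lemma qf_orth_split:
  assumes herm: "hermitian X" and eig: "X *v p = smul (of_real \<mu>) p" and n1: "ip p p = 1"
    and ort: "ip p u = 0"
  shows "qf X (smul a p + u) = complex_of_real ((cmod a)^2 * \<mu>) + qf X u"
proof -
  have c1: "ip (smul a p) (X *v u) = 0"
    using herm_ip[OF herm, of "smul a p" u] by (simp add: ip_smul_left mv_smul eig ip_smul_right ort)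
  have c2: "ip u (X *v smul a p) = 0"
  proof -
    have "ip u p = 0" using ort ip_cnj[of p u] by simp
    then show ?thesis by (simp add: mv_smul eig ip_smul_right)
  qed
  have q: "qf X (smul a p) = complex_of_real ((cmod a)^2 * \<mu>)"
  proof -
    have "qf X p = complex_of_real \<mu>" by (simp add: qf_def eig ip_smul_right n1)
    then show ?thesis by (simp add: qf_smul cnj_mult_self)
  qed
  show ?thesis by (simp add: qf_vadd c1 c2 q)
qed

lemma quad_lemma:
  fixes N B :: real
  assumes "\<And>t. 0 \<le> 2 * t * N + t^2 * B" and "0 \<le> N"
  shows "N = 0"
proof (rule ccontr)
  assume "N \<noteq> 0"
  then have Np: "0 < N" using assms(2) by simp
  define c where "c = \<bar>B\<bar> + 1"
  define t where "t = - N / c"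
  have d: "0 < c" unfolding c_def by simp
  have tc: "t * c = - N" unfolding t_def using d by simp
  have "0 \<le> 2 * t * N + t^2 * B" by (rule assms(1))
  then have "0 \<le> (2 * t * N + t^2 * B) * c^2" by simp
  also have "\<dots> = 2 * (t * c) * N * c + (t * c)^2 * B" by (simp add: power2_eq_square algebra_simps)
  also have "\<dots> = - 2 * N^2 * c + N^2 * B" unfolding tc by (simp add: power2_eq_square)
  also have "\<dots> < 0"
  proof -
    have "N^2 * B \<le> N^2 * \<bar>B\<bar>" by (simp add: mult_left_mono)
    moreover have "0 < N^2" using Np by simp
    moreover have "0 \<le> N^2 * \<bar>B\<bar>" by simp
    moreover have "2 * N^2 * c = 2 * N^2 * \<bar>B\<bar> + 2 * N^2" unfolding c_def by (simp add: algebra_simps)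
    ultimately show ?thesis by linarith
  qed
  finally show False by simp
qed



lemma smul_zero[simp]: "smul 0 v = 0" by (simp add: smul_def vec_eq_iff)

lemma key_zero:
  fixes Q :: "'l::finite \<Rightarrow> 'm::finite \<Rightarrow> complex^'d::finite^'d"
  assumes herm: "hermitian X" and povm: "\<forall>i. is_povm (Q i)" and det: "determines_pure Q"
    and MX: "meas_map Q X = 0" and psi: "norm \<psi> = 1"
    and H: "\<forall>v. 0 \<le> Re (qf X (v - smul (ip \<psi> v) \<psi>))"
  shows "X = 0"
proof -
  have tr: "ctrace X = 0" by (rule trace_zero[OF herm povm MX])
  have ne: "sphere (0::complex^'d) 1 \<noteq> {}" by simp
  obtain \<phi> where \<phi>S: "\<phi> \<in> sphere (0::complex^'d) 1"
    and mn: "\<And>v. v \<in> sphere 0 1 \<Longrightarrow> Re (qf X \<phi>) \<le> Re (qf X v)"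
    using continuous_attains_inf[OF compact_sphere ne qf_cont] by blast
  define \<mu> where "\<mu> = Re (qf X \<phi>)"
  have n1: "norm \<phi> = 1" using \<phi>S by simp
  have ip\<phi>: "ip \<phi> \<phi> = 1" using ip_one_norm[OF n1] .
  have q\<phi>: "qf X \<phi> = of_real \<mu>" unfolding \<mu>_def using qf_of_real[OF herm] .
  have glob: "\<mu> * (norm v)^2 \<le> Re (qf X v)" for v
  proof (cases "v = 0")
    case True then show ?thesis by (simp add: qf_def ip_def)
  next
    case False
    define w where "w = smul (of_real (1 / norm v)) v"
    have "norm w = 1" unfolding w_def scaleR_smul[symmetric] using False by simp
    then have "\<mu> \<le> Re (qf X w)" using mn unfolding \<mu>_def by simp
    also have "Re (qf X w) = Re (qf X v) / (norm v)^2"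
      unfolding w_def qf_smul by (simp add: power2_eq_square)
    finally show ?thesis using False by (simp add: pos_le_divide_eq)
  qed
  define r where "r = X *v \<phi> - smul (of_real \<mu>) \<phi>"
  have X\<phi>: "X *v \<phi> = r + smul (of_real \<mu>) \<phi>" unfolding r_def by simp
  have ir\<phi>: "ip r \<phi> = 0"
  proof -
    have "ip r \<phi> = ip (X *v \<phi>) \<phi> - of_real \<mu> * ip \<phi> \<phi>"
      by (simp add: r_def ip_diff_left ip_smul_left)
    also have "ip (X *v \<phi>) \<phi> = qf X \<phi>" by (simp add: qf_def herm_ip[OF herm])
    finally show ?thesis by (simp add: q\<phi> ip\<phi>)
  qed
  have i\<phi>r: "ip \<phi> r = 0" using ip_cnj[of r \<phi>] ir\<phi> by simp
  have c1: "ip r (X *v \<phi>) = ip r r" by (simp add: X\<phi> ip_add_right ip_smul_right ir\<phi>)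
  have c2: "ip \<phi> (X *v r) = ip r r"
    by (simp add: herm_ip[OF herm] X\<phi> ip_add_left ip_smul_left i\<phi>r)
  define N where "N = Re (ip r r)"
  define B where "B = Re (qf X r)"
  have Nn: "N = (norm r)^2" unfolding N_def by (simp add: ip_self)
  have quad: "0 \<le> 2 * t * N + t^2 * (B - \<mu> * N)" for t
  proof -
    define v where "v = \<phi> + smul (of_real t) r"
    have e1: "qf X v = of_real \<mu> + of_real (t^2) * qf X r + 2 * of_real t * ip r r"
      unfolding v_def qf_vadd qf_smul
      by (simp add: q\<phi> mv_smul ip_smul_left ip_smul_right c1 c2 power2_eq_square algebra_simps)
    have e2: "ip v v = 1 + of_real (t^2) * ip r r"
      unfolding v_def by (simp add: ip_add_left ip_add_right ip_smul_left ip_smul_right ip\<phi> ir\<phi> i\<phi>r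
          power2_eq_square)
    have "(norm v)^2 = 1 + t^2 * N"
    proof -
      have "complex_of_real ((norm v)^2) = 1 + of_real (t^2) * ip r r" using e2 ip_self[of v] by simp
      then have "Re (complex_of_real ((norm v)^2)) = Re (1 + of_real (t^2) * ip r r)" by simp
      then show ?thesis unfolding N_def by simp
    qed
    moreover have "Re (qf X v) = \<mu> + t^2 * B + 2 * t * N"
      unfolding e1 B_def N_def by simp
    ultimately show ?thesis using glob[of v] by (simp add: algebra_simps)
  qed
  have "N = 0" by (rule quad_lemma[OF quad]) (simp add: Nn)
  then have "r = 0" using Nn by simp
  then have eig: "X *v \<phi> = smul (of_real \<mu>) \<phi>" using X\<phi> by simp
  have comp: "0 \<le> Re (qf X u)" if ou: "ip \<phi> u = 0" and mneg: "\<mu> < 0" for u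
  proof (rule ccontr)
    assume neg: "\<not> 0 \<le> Re (qf X u)"
    define \<alpha> where "\<alpha> = ip \<psi> u"
    define \<beta> where "\<beta> = - ip \<psi> \<phi>"
    define w where "w = smul \<alpha> \<phi> + smul \<beta> u"
    have ortw: "ip \<phi> (smul \<beta> u) = 0" by (simp add: ip_smul_right ou)
    have qw: "qf X w = of_real ((cmod \<alpha>)^2 * \<mu>) + of_real ((cmod \<beta>)^2) * qf X u"
      unfolding w_def by (simp add: qf_orth_split[OF herm eig ip\<phi> ortw] qf_smul cnj_mult_self)
    have ipw: "ip \<psi> w = 0" unfolding w_def \<alpha>_def \<beta>_def
      by (simp add: ip_add_right ip_smul_right algebra_simps)
    have "0 \<le> Re (qf X w)" using H[rule_format, of w] ipw by simp
    then have "0 \<le> (cmod \<alpha>)^2 * \<mu> + (cmod \<beta>)^2 * Re (qf X u)" using qw by simp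
    moreover have "(cmod \<alpha>)^2 * \<mu> \<le> 0" using mneg by (simp add: mult_nonneg_nonpos)
    moreover have "(cmod \<beta>)^2 * Re (qf X u) \<le> 0" using neg by (simp add: mult_nonneg_nonpos)
    ultimately have "(cmod \<beta>)^2 * Re (qf X u) = 0" by linarith
    then have "\<beta> = 0" using neg by simp
    then have "ip \<psi> \<phi> = 0" unfolding \<beta>_def by simp
    then have "0 \<le> Re (qf X \<phi>)" using H[rule_format, of \<phi>] by simp
    then show False using mneg unfolding \<mu>_def by simp
  qed
  define s where "s = max 1 (- \<mu>)"
  have spos: "0 < s" unfolding s_def by simp
  have s\<mu>: "0 \<le> s + \<mu>" unfolding s_def by simp
  have psdZ: "psd (X + s *\<^sub>R outer \<phi>)"
    unfolding psd_iff
  proof (intro conjI allI)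
    show "hermitian (X + s *\<^sub>R outer \<phi>)" by (intro herm_add herm herm_scale herm_outer)
    fix v
    have qZ: "Re (qf (X + s *\<^sub>R outer \<phi>) v) = Re (qf X v) + s * (cmod (ip \<phi> v))^2"
      by (simp add: qf_add qf_scale qf_outer)
    show "0 \<le> Re (qf (X + s *\<^sub>R outer \<phi>) v)"
    proof (cases "0 \<le> \<mu>")
      case True
      have "0 \<le> \<mu> * (norm v)^2" using True by simp
      then have "0 \<le> Re (qf X v)" using glob[of v] by linarith
      moreover have "0 \<le> s * (cmod (ip \<phi> v))^2" using spos by simp
      ultimately show ?thesis unfolding qZ by linarith
    next
      case False
      define a where "a = ip \<phi> v"
      define u where "u = v - smul a \<phi>"
      have ou: "ip \<phi> u = 0" unfolding u_def a_def by (simp add: ip_diff_right ip_smul_right ip\<phi>)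
      have vd: "v = smul a \<phi> + u" unfolding u_def by simp
      have "qf X v = of_real ((cmod a)^2 * \<mu>) + qf X u"
        unfolding vd by (rule qf_orth_split[OF herm eig ip\<phi> ou])
      then have "Re (qf X v) = (cmod a)^2 * \<mu> + Re (qf X u)" by simp
      moreover have "0 \<le> Re (qf X u)" using comp[OF ou] False by simp
      moreover have "0 \<le> (cmod a)^2 * (s + \<mu>)" using s\<mu> by simp
      ultimately show ?thesis unfolding qZ a_def[symmetric] by (simp add: algebra_simps)
    qed
  qed
  define \<rho> where "\<rho> = (1 / s) *\<^sub>R (X + s *\<^sub>R outer \<phi>)"
  have psd\<rho>: "psd \<rho>" unfolding \<rho>_def using psdZ spos by (simp add: psd_scale)
  have tr\<rho>: "ctrace \<rho> = 1" unfolding \<rho>_def using spos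
    by (simp add: ctrace_scale ctrace_add ctrace_outer tr n1)
  have st: "is_state \<rho>" unfolding is_state_def using psd\<rho> tr\<rho> by simp
  have pure: "is_pure_state (outer \<phi>)" by (rule pure_outer[OF n1])
  have M\<rho>: "meas_map Q (outer \<phi>) = meas_map Q \<rho>" unfolding \<rho>_def using spos
    by (simp add: meas_scale meas_add MX)
  have "\<rho> = outer \<phi>" using det pure st M\<rho> unfolding determines_pure_def by blast
  then have "(1 / s) *\<^sub>R X + outer \<phi> = outer \<phi>" unfolding \<rho>_def using spos
    by (simp add: scaleR_add_right)
  then have "(1 / s) *\<^sub>R X = 0" by simp
  then show "X = 0" using spos by simp
qed



lemma qf_diff: "qf (X - Y) v = qf X v - qf Y v"
proof -
  have "(X - Y) *v v = X *v v - Y *v v"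
    by (simp add: matrix_vector_mult_def vec_eq_iff sum_subtractf algebra_simps)
  then show ?thesis by (simp add: qf_def ip_diff_right)
qed

lemma pure_is_outer: "is_pure_state \<sigma> \<Longrightarrow> \<exists>p. norm p = 1 \<and> \<sigma> = outer p"
  unfolding is_pure_state_def outer_def by blast

lemma cone_cond:
  assumes Y: "psd Y" and p: "norm p = 1"
  shows "0 \<le> Re (qf (Y - outer p) (v - smul (ip p v) p))"
proof -
  have "ip p (v - smul (ip p v) p) = 0"
    using ip_one_norm[OF p] by (simp add: ip_diff_right ip_smul_right)
  then have "qf (outer p) (v - smul (ip p v) p) = 0" by (simp add: qf_outer)
  then show ?thesis using Y unfolding psd_iff by (simp add: qf_diff)
qed

lemma qf_proj_expand:
  "qf X (v - smul c p) = (\<Sum>i\<in>UNIV. \<Sum>j\<in>UNIV. cnj (v$i - c * p$i) * X$i$j * (v$j - c * p$j))"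
  unfolding qf_sum[symmetric] by simp

definition Tset :: "((complex^'d^'d) \<times> (complex^'d)) set" where
  "Tset = {z. (\<forall>i j. cnj (fst z $ i $ j) = fst z $ j $ i) \<and> norm (fst z) = 1 \<and> norm (snd z) = 1 \<and>
     (\<forall>v. 0 \<le> Re (qf (fst z) (v - smul (ip (snd z) v) (snd z))))}"

lemma herm_iff_entries: "hermitian X \<longleftrightarrow> (\<forall>i j. cnj (X $ i $ j) = X $ j $ i)"
  unfolding hermitian_def cmat_adj_def vec_eq_iff by auto

lemma Tset_compact: "compact (Tset :: ((complex^'d^'d) \<times> (complex^'d)) set)"
proof -
  have cl: "closed (Tset :: ((complex^'d^'d) \<times> (complex^'d)) set)"
    unfolding Tset_def qf_proj_expand ip_def
    by (intro closed_Collect_conj closed_Collect_all closed_Collect_eq closed_Collect_le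
        continuous_intros)
  have "(Tset :: ((complex^'d^'d) \<times> (complex^'d)) set) \<subseteq> sphere 0 1 \<times> sphere 0 1"
    unfolding Tset_def by auto
  moreover have "bounded (sphere (0::complex^'d^'d) 1 \<times> sphere (0::complex^'d) 1)"
    by (intro bounded_Times bounded_sphere)
  ultimately have "bounded (Tset :: ((complex^'d^'d) \<times> (complex^'d)) set)" by (rule bounded_subset[rotated])
  then show ?thesis using cl by (simp add: compact_eq_bounded_closed)
qed

lemma meas_cont: "continuous_on S (\<lambda>z. norm (meas_map Q (fst z)))"
proof -
  have "bounded_linear (meas_map Q)" using meas_linear linear_conv_bounded_linear by blast
  then have "continuous_on S (\<lambda>z. meas_map Q (fst z))"
    by (intro continuous_on_compose2[OF linear_continuous_on[of "meas_map Q" UNIV]] continuous_intros) auto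
  then show ?thesis by (intro continuous_intros)
qed

lemma stab_const:
  fixes Q :: "'l::finite \<Rightarrow> 'm::finite \<Rightarrow> complex^'d::finite^'d"
  assumes povm: "\<forall>i. is_povm (Q i)" and det: "determines_pure Q"
  shows "\<exists>c>0. \<forall>z\<in>(Tset :: ((complex^'d^'d) \<times> (complex^'d)) set). c \<le> norm (meas_map Q (fst z))"
proof (cases "(Tset :: ((complex^'d^'d) \<times> (complex^'d)) set) = {}")
  case True then show ?thesis by (intro exI[of _ 1]) auto
next
  case False
  obtain z0 where z0: "z0 \<in> (Tset :: ((complex^'d^'d) \<times> (complex^'d)) set)"
    and mn: "\<And>z. z \<in> Tset \<Longrightarrow> norm (meas_map Q (fst z0)) \<le> norm (meas_map Q (fst z))"
    using continuous_attains_inf[OF Tset_compact False meas_cont] by blast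
  have pos: "0 < norm (meas_map Q (fst z0))"
  proof (rule ccontr)
    assume "\<not> 0 < norm (meas_map Q (fst z0))"
    then have M0: "meas_map Q (fst z0) = 0" by simp
    have h: "hermitian (fst z0)" using z0 unfolding Tset_def herm_iff_entries by simp
    have "fst z0 = 0"
      by (rule key_zero[OF h povm det M0, of "snd z0"]) (use z0 in \<open>auto simp: Tset_def\<close>)
    then show False using z0 unfolding Tset_def by simp
  qed
  show ?thesis using pos mn by blast
qed

lemma stab_bound:
  fixes Q :: "'l::finite \<Rightarrow> 'm::finite \<Rightarrow> complex^'d::finite^'d"
  assumes c: "\<forall>z\<in>(Tset :: ((complex^'d^'d) \<times> (complex^'d)) set). c \<le> norm (meas_map Q (fst z))"
    and Y: "psd Y" and p: "norm p = 1"
  shows "c * norm (Y - outer p) \<le> norm (meas_map Q (Y - outer p))"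
proof (cases "Y - outer p = 0")
  case True then show ?thesis by simp
next
  case False
  define X where "X = Y - outer p"
  define n where "n = norm X"
  have npos: "0 < n" using False unfolding n_def X_def by simp
  have hX: "hermitian X" unfolding X_def using Y herm_outer[of p] by (simp add: psd_iff herm_diff)
  have h1: "\<forall>i j. cnj (((1 / n) *\<^sub>R X) $ i $ j) = ((1 / n) *\<^sub>R X) $ j $ i"
    using herm_scale[OF hX, of "1 / n"] unfolding herm_iff_entries .
  have n1: "norm ((1 / n) *\<^sub>R X) = 1" using npos unfolding n_def by simp
  have cc: "\<forall>v. 0 \<le> Re (qf ((1 / n) *\<^sub>R X) (v - smul (ip p v) p))"
  proof
    fix v
    have "0 \<le> Re (qf X (v - smul (ip p v) p))" unfolding X_def by (rule cone_cond[OF Y p])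
    then show "0 \<le> Re (qf ((1 / n) *\<^sub>R X) (v - smul (ip p v) p))" using npos
      by (simp add: qf_scale)
  qed
  have "((1 / n) *\<^sub>R X, p) \<in> Tset"
    unfolding Tset_def using h1 n1 cc p by (simp del: norm_scaleR scaleR_cplx)
  then have "c \<le> norm (meas_map Q ((1 / n) *\<^sub>R X))" using c by auto
  also have "\<dots> = norm (meas_map Q X) / n" using npos by (simp add: meas_scale)
  finally show ?thesis using npos unfolding X_def[symmetric] n_def by (simp add: pos_le_divide_eq)
qed



lemma frob_norm: "frob (A::real^'m^'l) = norm A"
proof -
  have "(norm A)^2 = (\<Sum>i\<in>UNIV. \<Sum>j\<in>UNIV. (A$i$j)^2)"
    by (simp add: norm_vec_def L2_set_def sum_nonneg)
  then have "frob A = sqrt ((norm A)^2)" unfolding frob_def by simp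
  then show ?thesis by simp
qed

theorem theorem4:
  fixes Q :: "'l::finite \<Rightarrow> 'm::finite \<Rightarrow> complex^'d::finite^'d"
    and NH :: "complex^'d^'d \<Rightarrow> real"
    and NM :: "real^'m^'l \<Rightarrow> real"
  assumes "is_norm_on {X. hermitian X} NH"
    and "is_norm_on UNIV NM"
    and "\<forall>i. is_povm (Q i)"
    and "determines_pure Q"
  shows "\<exists>C>0. \<forall>\<epsilon>>0. \<forall>\<sigma> f. is_pure_state \<sigma> \<longrightarrow> NM f \<le> \<epsilon> \<longrightarrow>
           (\<forall>Y. is_minimizer Q (meas_map Q \<sigma> + f) Y \<longrightarrow> NH (Y - \<sigma>) \<le> C * \<epsilon>)"
proof -
  have sub: "subspace {X::complex^'d^'d. hermitian X}"
    unfolding subspace_def using herm_zero herm_add herm_scale by auto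
  obtain KH where KH: "\<forall>X\<in>{X. hermitian X}. NH X \<le> KH * norm X"
    using norm_on_upper[OF sub assms(1)] by blast
  obtain cM where cM: "cM > 0" "\<forall>f. cM * norm f \<le> NM f"
    using norm_on_lower[OF assms(2)] by blast
  obtain c where c: "c > 0" "\<forall>z\<in>(Tset :: ((complex^'d^'d) \<times> (complex^'d)) set). c \<le> norm (meas_map Q (fst z))"
    using stab_const[OF assms(3,4)] by blast
  define C where "C = (\<bar>KH\<bar> + 1) * 2 / (cM * c)"
  have Cpos: "C > 0" unfolding C_def using cM(1) c(1) by (simp add: add_pos_nonneg)
  show ?thesis
  proof (intro exI[of _ C] conjI Cpos allI impI)
    fix \<epsilon> :: real and \<sigma> f Y
    assume \<epsilon>: "0 < \<epsilon>" and \<sigma>: "is_pure_state \<sigma>" and f: "NM f \<le> \<epsilon>"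
      and Y: "is_minimizer Q (meas_map Q \<sigma> + f) Y"
    obtain p where p: "norm p = 1" "\<sigma> = outer p" using pure_is_outer[OF \<sigma>] by blast
    have psdY: "psd Y" using Y by (simp add: is_minimizer_def)
    have psd\<sigma>: "psd \<sigma>" using \<sigma> by (simp add: is_pure_state_def is_state_def)
    have "frob (meas_map Q Y - (meas_map Q \<sigma> + f)) \<le> frob (meas_map Q \<sigma> - (meas_map Q \<sigma> + f))"
      using Y psd\<sigma> unfolding is_minimizer_def by blast
    then have m1: "norm (meas_map Q Y - (meas_map Q \<sigma> + f)) \<le> norm f" by (simp add: frob_norm)
    have "meas_map Q (Y - \<sigma>) = (meas_map Q Y - (meas_map Q \<sigma> + f)) + f" by (simp add: meas_diff)
    then have "norm (meas_map Q (Y - \<sigma>)) \<le> norm (meas_map Q Y - (meas_map Q \<sigma> + f)) + norm f"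
      by (metis norm_triangle_ineq)
    then have m2: "norm (meas_map Q (Y - \<sigma>)) \<le> 2 * norm f" using m1 by linarith
    have nf: "cM * norm f \<le> \<epsilon>" using cM(2) f by (meson order_trans)
    have sb: "c * norm (Y - \<sigma>) \<le> norm (meas_map Q (Y - \<sigma>))"
      using stab_bound[OF c(2) psdY p(1)] p(2) by simp
    have hYs: "hermitian (Y - \<sigma>)" using psdY psd\<sigma> by (simp add: psd_iff herm_diff)
    have "NH (Y - \<sigma>) \<le> KH * norm (Y - \<sigma>)" using KH hYs by blast
    also have "\<dots> \<le> (\<bar>KH\<bar> + 1) * norm (Y - \<sigma>)" by (simp add: mult_right_mono)
    also have "\<dots> \<le> (\<bar>KH\<bar> + 1) * (2 * \<epsilon> / (cM * c))"
    proof (rule mult_left_mono)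
      have "c * norm (Y - \<sigma>) \<le> 2 * norm f" using sb m2 by linarith
      then have "cM * (c * norm (Y - \<sigma>)) \<le> cM * (2 * norm f)" using cM(1) by simp
      then have "c * cM * norm (Y - \<sigma>) \<le> cM * (2 * norm f)" by (simp add: mult_ac)
      also have "\<dots> \<le> 2 * \<epsilon>" using nf by simp
      finally have "(cM * c) * norm (Y - \<sigma>) \<le> 2 * \<epsilon>" by (simp add: mult_ac)
      then show "norm (Y - \<sigma>) \<le> 2 * \<epsilon> / (cM * c)" using cM(1) c(1)
        by (simp add: pos_le_divide_eq mult_ac)
    qed simp
    also have "\<dots> = C * \<epsilon>" unfolding C_def by simp
    finally show "NH (Y - \<sigma>) \<le> C * \<epsilon>" .
  qed
qed

end
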